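(* There is an absolute constant $C>0$ such that the following holds. Let $R>0$, let $\{\xi_k\}$ be a finite set of points of $\mathbb{R}^2$ lying on the circle $\{\xi\in\mathbb{R}^2:\ \|\xi\|=R\}$, and let $$M:=\sup_j \#\{k:\ \|\xi_k-\xi_j\|\le R^{1/2}\}.$$ Then for every choice of complex coefficients $\{a_k\}$, $$\sup_{Q}\left(\int_{Q}\Big|\sum_k a_k e^{2\pi i\,\xi_k\cdot x}\Big|^4\,dx\right)^{1/4}\le C\,M^{1/2}\Big(\sum_k |a_k|^2\Big)^{1/2},$$ where the supremum is taken over all squares $Q\subset\mathbb{R}^2$ of Lebesgue measure $1$ and $dx$ is Lebesgue measure. In particular $C$ does not depend on $R$, on the points $\xi_k$, or on the coefficients. *)

theory Defs
  imports "HOL-Analysis.Analysis"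
begin

definition unit_square :: "(real^2) set \<Rightarrow> bool" where
  "unit_square Q \<longleftrightarrow> (\<exists>c u v :: real^2. norm u = 1 \<and> norm v = 1 \<and> u \<bullet> v = 0 \<and>
      Q = {c + s *\<^sub>R u + t *\<^sub>R v | s t. s \<in> {0..1} \<and> t \<in> {0..1}})"

definition cap_mult :: "real \<Rightarrow> (real^2) set \<Rightarrow> nat" where
  "cap_mult R S = Max ((\<lambda>\<eta>. card {\<xi>\<in>S. dist \<xi> \<eta> \<le> sqrt R}) ` S)"

definition exp_sum :: "(real^2) set \<Rightarrow> (real^2 \<Rightarrow> complex) \<Rightarrow> real^2 \<Rightarrow> complex" where
  "exp_sum S a x = (\<Sum>\<xi>\<in>S. a \<xi> * cis (2 * pi * (\<xi> \<bullet> x)))"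

end

theory Submission
  imports Defs
begin


lemma integral_lborel_prod_basis:
  fixes f :: "'a::euclidean_space \<Rightarrow> real \<Rightarrow> complex"
  assumes int: "\<And>b. b \<in> Basis \<Longrightarrow> integrable lborel (f b)"
  shows "(\<integral>x. (\<Prod>b\<in>Basis. f b (x \<bullet> b)) \<partial>(lborel::'a measure)) = (\<Prod>b\<in>Basis. (\<integral>t. f b t \<partial>lborel))"
proof -
  interpret P: product_sigma_finite "\<lambda>b::'a. (lborel::real measure)"
    by standard
  have meas: "\<And>b. b \<in> Basis \<Longrightarrow> f b \<in> borel_measurable borel"
    using borel_measurable_integrable[OF int] by simp
  have "(\<integral>x. (\<Prod>b\<in>Basis. f b (x \<bullet> b)) \<partial>(lborel::'a measure))
      = (\<integral>g. (\<Prod>b\<in>Basis. f b ((\<Sum>b'\<in>Basis. g b' *\<^sub>R b') \<bullet> b)) \<partial>(\<Pi>\<^sub>M b\<in>Basis. lborel))"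
    apply (subst lborel_eq)
    apply (rule integral_distr)
     apply measurable
    apply (rule measurable_compose[OF _ meas], auto)
    done
  also have "\<dots> = (\<integral>g. (\<Prod>b\<in>Basis. f b (g b)) \<partial>(\<Pi>\<^sub>M b\<in>Basis. lborel))"
    by (intro Bochner_Integration.integral_cong refl prod.cong) (simp add: inner_sum_left inner_Basis if_distrib cong: if_cong)
  also have "\<dots> = (\<Prod>b\<in>Basis. (\<integral>t. f b t \<partial>lborel))"
    by (rule P.product_integral_prod) (auto intro: int)
  finally show ?thesis .
qed


lemma deriv_H:
  fixes b c1 c2 s :: complex
  assumes "c1 * (\<i> * b) = 1" "c2 * b^2 = 1" 
  shows "((\<lambda>z. c1 * ((4 + s*z) * exp (\<i>*b*z)) + s * c2 * exp (\<i>*b*z))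
     has_field_derivative ((4 + s*z) * exp (\<i>*b*z))) (at z)"
proof -
  have "b \<noteq> 0" using assms(1) by auto
  have "b * c1 = - \<i> * (\<i> * (b * c1))" by (simp add: algebra_simps)
  also have "\<dots> = - \<i>" using assms(1) by (simp add: algebra_simps)
  finally have c1: "c1 = - \<i> / b" using \<open>b \<noteq> 0\<close> by (auto simp: field_simps)
  have c2: "c2 = 1 / b^2" using assms(2) \<open>b \<noteq> 0\<close> by (auto simp: field_simps)
  have e: "((\<lambda>z. exp (\<i>*b*z)) has_field_derivative (\<i>*b*exp (\<i>*b*z))) (at z)"
    by (rule derivative_eq_intros refl | simp)+
  have l: "((\<lambda>z. 4 + s*z) has_field_derivative s) (at z)"
    by (rule derivative_eq_intros refl | simp)+
  have d: "((\<lambda>z. c1 * ((4 + s*z) * exp (\<i>*b*z)) + s * c2 * exp (\<i>*b*z))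
     has_field_derivative (c1 * (s * exp (\<i>*b*z) + (\<i>*b*exp (\<i>*b*z)) * (4 + s*z)) + s * c2 * (\<i>*b*exp (\<i>*b*z)))) (at z)"
    by (intro DERIV_add DERIV_cmult DERIV_mult l e)
  have "c1 * (s * exp (\<i>*b*z) + (\<i>*b*exp (\<i>*b*z)) * (4 + s*z)) + s * c2 * (\<i>*b*exp (\<i>*b*z))
     = (4 + s*z) * exp (\<i>*b*z)"
    unfolding c1 c2 using \<open>b \<noteq> 0\<close> by (simp add: field_simps power2_eq_square)
  with d show ?thesis by simp
qed


lemma ftc_piece:
  fixes b s :: real and lo hi :: real
  assumes "b \<noteq> 0" "lo \<le> hi"
  defines "H \<equiv> \<lambda>x::real. (- \<i> / of_real b) * ((4 + of_real s * of_real x) * exp (\<i> * of_real b * of_real x))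
                     + of_real s * (1 / (of_real b)^2) * exp (\<i> * of_real b * of_real x)"
  shows "(\<integral>t. indicator {lo..hi} t *\<^sub>R (of_real (4 + s*t) * exp (\<i> * of_real (b*t))) \<partial>lborel) = H hi - H lo"
proof (rule integral_FTC_atLeastAtMost[OF assms(2)])
  fix x assume "lo \<le> x" "x \<le> hi"
  have 1: "(- \<i> / of_real b) * (\<i> * of_real b) = (1::complex)" using assms(1) by (simp add: field_simps)
  have 2: "(1 / (of_real b)^2) * (of_real b)^2 = (1::complex)" using assms(1) by (simp add: field_simps)
  have "((\<lambda>x. H x) has_vector_derivative ((4 + of_real s * of_real x) * exp (\<i> * of_real b * of_real x))) (at x within {lo..hi})"
    unfolding H_def
    by (rule has_vector_derivative_real_field[OF deriv_H[OF 1 2, of "of_real s" "of_real x"]])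
  then show "(H has_vector_derivative (of_real (4 + s*x) * exp (\<i> * of_real (b*x)))) (at x within {lo..hi})"
    by (simp add: mult.assoc)
next
  show "continuous_on {lo..hi} (\<lambda>t. of_real (4 + s*t) * exp (\<i> * complex_of_real (b*t)))"
    by (intro continuous_intros)
qed


lemma integrable_compact_support:
  fixes f :: "'a::euclidean_space \<Rightarrow> 'b::{banach, second_countable_topology}"
  assumes "compact K" "continuous_on UNIV f" "\<And>x. x \<notin> K \<Longrightarrow> f x = 0"
  shows "integrable lborel f"
proof -
  have "f = (\<lambda>x. indicator K x *\<^sub>R f x)"
    using assms(3) by (auto simp: fun_eq_iff indicator_def)
  moreover have "integrable lborel (\<lambda>x. indicator K x *\<^sub>R f x)"
    by (rule borel_integrable_compact[OF assms(1)]) (rule continuous_on_subset[OF assms(2)], auto)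
  ultimately show ?thesis by simp
qed

definition tri :: "real \<Rightarrow> real" where "tri t = max 0 (4 - \<bar>t\<bar>)"

lemma continuous_on_tri[continuous_intros]:
  "continuous_on A f \<Longrightarrow> continuous_on A (\<lambda>x. tri (f x))"
  unfolding tri_def by (intro continuous_intros)

lemma tri_ft:
  fixes b :: real
  assumes "b \<noteq> 0"
  shows "(\<integral>t. of_real (tri t) * exp (\<i> * of_real (b*t)) \<partial>lborel) = (2 - exp (4*\<i>*b) - exp (-4*\<i>*b)) / (of_real b)^2"
proof -
  define g1 where "g1 = (\<lambda>t. of_real (4 + 1*t) * exp (\<i> * of_real (b*t)))"
  define g2 where "g2 = (\<lambda>t. of_real (4 + (-1)*t) * exp (\<i> * of_real (b*t)))"
  have ae: "AE t in lborel. of_real (tri t) * exp (\<i> * of_real (b*t)) =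
      indicator {-4..0} t *\<^sub>R g1 t + indicator {0..4} t *\<^sub>R g2 t"
    using AE_lborel_singleton[of 0]
    by eventually_elim (auto simp: tri_def g1_def g2_def indicator_def)
  have i1: "integrable lborel (\<lambda>t. indicator {-4..0} t *\<^sub>R g1 t)"
    unfolding g1_def by (rule borel_integrable_compact) (auto intro!: continuous_intros)
  have i2: "integrable lborel (\<lambda>t. indicator {0..4} t *\<^sub>R g2 t)"
    unfolding g2_def by (rule borel_integrable_compact) (auto intro!: continuous_intros)
  have "(\<integral>t. of_real (tri t) * exp (\<i> * of_real (b*t)) \<partial>lborel) =
      (\<integral>t. indicator {-4..0} t *\<^sub>R g1 t + indicator {0..4} t *\<^sub>R g2 t \<partial>lborel)"
  proof (rule integral_cong_AE)
    show "(\<lambda>t. of_real (tri t) * exp (\<i> * of_real (b*t))) \<in> borel_measurable lborel"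
      by (simp, intro borel_measurable_continuous_onI continuous_intros)
    show "(\<lambda>t. indicator {-4..0} t *\<^sub>R g1 t + indicator {0..4} t *\<^sub>R g2 t) \<in> borel_measurable lborel"
      using i1 i2 by (intro borel_measurable_add borel_measurable_integrable)
  qed (use ae in auto)
  also have "\<dots> = (\<integral>t. indicator {-4..0} t *\<^sub>R g1 t \<partial>lborel) + (\<integral>t. indicator {0..4} t *\<^sub>R g2 t \<partial>lborel)"
    by (rule Bochner_Integration.integral_add[OF i1 i2])
  also have "\<dots> = (2 - exp (4*\<i>*b) - exp (-4*\<i>*b)) / (of_real b)^2"
    unfolding g1_def g2_def
    apply (subst ftc_piece[OF assms], simp)+
    using assms by (simp add: field_simps power2_eq_square)
  finally show ?thesis .
qed


lemma tri_nonneg: "0 \<le> tri t" by (simp add: tri_def)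

lemma integrable_tri: "integrable lborel tri"
  by (rule integrable_compact_support[of "{-4..4}"]) (auto simp: tri_def intro!: continuous_intros)

lemma integral_tri_le: "(\<integral>t. tri t \<partial>lborel) \<le> 32"
proof -
  have "(\<integral>t. tri t \<partial>lborel) \<le> (\<integral>t. 4 * indicator {-4..4::real} t \<partial>lborel)"
  proof (rule integral_mono[OF integrable_tri])
    show "integrable lborel (\<lambda>t. (4::real) * indicator {-4..4::real} t)"
      by (intro integrable_mult_right integrable_real_indicator) auto
  qed (auto simp: tri_def indicator_def)
  also have "\<dots> = 32" by simp
  finally show ?thesis .
qed

lemma tri_ft_le32:
  "norm (\<integral>t. of_real (tri t) * exp (\<i> * of_real (b*t)) \<partial>lborel) \<le> 32"
proof -
  have "norm (\<integral>t. of_real (tri t) * exp (\<i> * of_real (b*t)) \<partial>lborel)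
     \<le> (\<integral>t. norm (of_real (tri t) * exp (\<i> * of_real (b*t))) \<partial>lborel)"
    by (rule integral_norm_bound)
  also have "\<dots> = (\<integral>t. tri t \<partial>lborel)"
    by (rule Bochner_Integration.integral_cong) (auto simp: norm_mult tri_nonneg)
  finally show ?thesis using integral_tri_le by linarith
qed

lemma tri_ft_bound0:
  fixes y :: real
  shows "norm (\<integral>t. of_real (tri t) * cis (2*pi*y*t) \<partial>lborel) \<le> 64 / (1 + y^2)"
proof -
  have eq: "(\<lambda>t. of_real (tri t) * cis (2*pi*y*t)) = (\<lambda>t. of_real (tri t) * exp (\<i> * of_real ((2*pi*y)*t)))"
    by (simp add: cis_conv_exp mult.assoc)
  have le32: "norm (\<integral>t. of_real (tri t) * cis (2*pi*y*t) \<partial>lborel) \<le> 32"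
    unfolding eq by (rule tri_ft_le32)
  show ?thesis
  proof (cases "y^2 \<le> 1")
    case True
    have p: "0 < 1 + y^2" by (simp add: add_pos_nonneg)
    have "32 \<le> 64 / (1 + y^2)" using True p by (simp add: le_divide_eq)
    with le32 show ?thesis by linarith
  next
    case False
    then have y0: "y \<noteq> 0" by auto
    define b where "b = 2*pi*y"
    have b0: "b \<noteq> 0" using y0 by (simp add: b_def)
    have "norm (\<integral>t. of_real (tri t) * cis (2*pi*y*t) \<partial>lborel) = norm ((2 - exp (4*\<i>*b) - exp (-4*\<i>*b)) / (of_real b)^2)"
    proof -
      have "(\<lambda>t. of_real (tri t) * cis (2*pi*y*t)) = (\<lambda>t. of_real (tri t) * exp (\<i> * of_real (b*t)))"
        unfolding b_def by (simp add: cis_conv_exp mult.assoc)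
      then show ?thesis using tri_ft[OF b0] by simp
    qed
    also have "\<dots> \<le> 4 / b^2"
    proof -
      have "norm (2 - exp (4*\<i>*b) - exp (-4*\<i>*b)) \<le> norm (2::complex) + norm (exp (4*\<i>*b)) + norm (exp (-4*\<i>*b))"
        using norm_triangle_ineq4[of "2 - exp (4*\<i>*b)" "exp (-4*\<i>*b)"] norm_triangle_ineq4[of "2::complex" "exp (4*\<i>*b)"] by linarith
      also have "\<dots> = 4" by (simp add: norm_exp_i_times)
      finally show ?thesis by (simp add: norm_divide norm_power divide_right_mono)
    qed
    also have "\<dots> \<le> 64 / (1 + y^2)"
    proof -
      have y2: "1 < y^2" using False by simp
      have "b^2 = 4*pi^2*y^2" unfolding b_def by (simp add: power_mult_distrib)
      moreover have "pi^2 \<ge> 1" using pi_gt3 by (simp add: less_imp_le one_le_power)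
      ultimately have "b^2 \<ge> 4 * y^2" by (simp add: mult_right_mono)
      then have "4 / b^2 \<le> 4 / (4*y^2)" using y2 by (intro divide_left_mono) (auto intro!: mult_pos_pos)
      also have "\<dots> = 1 / y^2" by simp
      also have "\<dots> \<le> 64 / (1 + y^2)" using y2 by (simp add: divide_simps)
      finally show ?thesis .
    qed
    finally show ?thesis .
  qed
qed


lemma tri_ft_bound:
  fixes y c :: real
  shows "norm (\<integral>t. of_real (tri (t - c)) * cis (2*pi*y*t) \<partial>lborel) \<le> 64 / (1 + y^2)"
proof -
  have "(\<integral>t. of_real (tri (t - c)) * cis (2*pi*y*t) \<partial>lborel)
      = \<bar>1\<bar> *\<^sub>R (\<integral>t. of_real (tri ((c + 1*t) - c)) * cis (2*pi*y*(c + 1*t)) \<partial>lborel)"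
    by (rule lborel_integral_real_affine) simp
  also have "\<dots> = (\<integral>t. cis (2*pi*y*c) * (of_real (tri t) * cis (2*pi*y*t)) \<partial>lborel)"
    by (simp add: distrib_left cis_mult[symmetric] mult_ac)
  also have "\<dots> = cis (2*pi*y*c) * (\<integral>t. of_real (tri t) * cis (2*pi*y*t) \<partial>lborel)"
    by (rule integral_mult_right_zero)
  finally have "norm (\<integral>t. of_real (tri (t - c)) * cis (2*pi*y*t) \<partial>lborel) = norm (\<integral>t. of_real (tri t) * cis (2*pi*y*t) \<partial>lborel)"
    by (simp add: norm_mult)
  with tri_ft_bound0[of y] show ?thesis by simp
qed

lemma cis_sum: "finite A \<Longrightarrow> cis (\<Sum>i\<in>A. f i) = (\<Prod>i\<in>A. cis (f i))"
  by (induction A rule: finite_induct) (auto simp: cis_mult[symmetric])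

definition W :: "'a::euclidean_space \<Rightarrow> 'a \<Rightarrow> real" where
  "W c x = (\<Prod>b\<in>Basis. tri (x \<bullet> b - c \<bullet> b))"

lemma W_nonneg: "0 \<le> W c x"
  unfolding W_def by (intro prod_nonneg) (simp add: tri_nonneg)

lemma continuous_W: "continuous_on UNIV (W c)"
  unfolding W_def by (intro continuous_intros)

lemma W_zero_outside: "x \<notin> cbox (c - (\<Sum>b\<in>Basis. 4 *\<^sub>R b)) (c + (\<Sum>b\<in>Basis. 4 *\<^sub>R b)) \<Longrightarrow> W c x = 0"
proof -
  assume "x \<notin> cbox (c - (\<Sum>b\<in>Basis. 4 *\<^sub>R b)) (c + (\<Sum>b\<in>Basis. 4 *\<^sub>R b))"
  then obtain b where b: "b \<in> Basis" "\<not> (c \<bullet> b - 4 \<le> x \<bullet> b \<and> x \<bullet> b \<le> c \<bullet> b + 4)"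
    by (auto simp: mem_box inner_diff_left inner_add_left inner_sum_left inner_Basis if_distrib cong: if_cong)
  then have "tri (x \<bullet> b - c \<bullet> b) = 0" by (auto simp: tri_def)
  then show "W c x = 0" unfolding W_def using b(1) by (intro prod_zero) auto
qed

lemma W_ft:
  fixes c \<zeta> :: "'a::euclidean_space"
  shows "(\<integral>x. of_real (W c x) * cis (2*pi*(\<zeta> \<bullet> x)) \<partial>lborel)
     = (\<Prod>b\<in>Basis. (\<integral>t. of_real (tri (t - c \<bullet> b)) * cis (2*pi*(\<zeta> \<bullet> b)*t) \<partial>lborel))"
proof -
  have eq: "(\<lambda>x. of_real (W c x) * cis (2*pi*(\<zeta> \<bullet> x))) =
      (\<lambda>x. \<Prod>b\<in>Basis. of_real (tri ((x \<bullet> b) - c \<bullet> b)) * cis (2*pi*(\<zeta> \<bullet> b)*(x \<bullet> b)))"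
  proof
    fix x
    have "cis (2*pi*(\<zeta> \<bullet> x)) = cis (\<Sum>b\<in>Basis. 2*pi*(\<zeta> \<bullet> b)*(x \<bullet> b))"
      by (subst euclidean_inner) (simp add: sum_distrib_left mult_ac)
    also have "\<dots> = (\<Prod>b\<in>Basis. cis (2*pi*(\<zeta> \<bullet> b)*(x \<bullet> b)))"
      by (rule cis_sum) simp
    finally show "of_real (W c x) * cis (2*pi*(\<zeta> \<bullet> x)) =
      (\<Prod>b\<in>Basis. of_real (tri ((x \<bullet> b) - c \<bullet> b)) * cis (2*pi*(\<zeta> \<bullet> b)*(x \<bullet> b)))"
      by (simp add: W_def prod.distrib)
  qed
  show ?thesis
    unfolding eq
  proof (rule integral_lborel_prod_basis)
    fix b :: 'a assume "b \<in> Basis"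
    show "integrable lborel (\<lambda>t. of_real (tri (t - c \<bullet> b)) * cis (2*pi*(\<zeta> \<bullet> b)*t))"
      by (rule integrable_compact_support[of "{c \<bullet> b - 4 .. c \<bullet> b + 4}"])
         (auto simp: tri_def intro!: continuous_intros)
  qed
qed

lemma W_ft_bound:
  fixes c \<zeta> :: "'a::euclidean_space"
  shows "norm (\<integral>x. of_real (W c x) * cis (2*pi*(\<zeta> \<bullet> x)) \<partial>lborel)
     \<le> (\<Prod>b\<in>Basis. 64 / (1 + (\<zeta> \<bullet> b)^2))"
  unfolding W_ft prod_norm[symmetric]
  by (intro prod_mono conjI norm_ge_zero tri_ft_bound)


lemma integrable_W_cis:
  fixes c \<zeta> :: "'a::euclidean_space"
  shows "integrable lborel (\<lambda>x. of_real (W c x) * cis (2*pi*(\<zeta> \<bullet> x)))"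
  by (rule integrable_compact_support[OF compact_cbox, of _ "c - (\<Sum>b\<in>Basis. 4 *\<^sub>R b)" "c + (\<Sum>b\<in>Basis. 4 *\<^sub>R b)"])
     (auto simp: W_zero_outside intro!: continuous_intros continuous_on_compose2[OF continuous_W])

lemma exp_sum_sq:
  "(exp_sum S a x)^2 = (\<Sum>p\<in>S\<times>S. (a (fst p) * a (snd p)) * cis (2*pi*((fst p + snd p) \<bullet> x)))"
proof -
  have "(exp_sum S a x)^2 = (\<Sum>j\<in>S. \<Sum>k\<in>S. (a j * cis (2*pi*(j \<bullet> x))) * (a k * cis (2*pi*(k \<bullet> x))))"
    unfolding exp_sum_def power2_eq_square sum_product ..
  also have "\<dots> = (\<Sum>j\<in>S. \<Sum>k\<in>S. (a j * a k) * cis (2*pi*((j + k) \<bullet> x)))"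
    by (intro sum.cong refl) (simp add: cis_mult inner_add_left distrib_left mult_ac)
  also have "\<dots> = (\<Sum>p\<in>S\<times>S. (a (fst p) * a (snd p)) * cis (2*pi*((fst p + snd p) \<bullet> x)))"
    by (simp add: sum.cartesian_product case_prod_beta)
  finally show ?thesis .
qed

lemma norm4_expand:
  fixes B :: "'i \<Rightarrow> complex" and \<eta> :: "'i \<Rightarrow> 'a::euclidean_space"
  shows "complex_of_real ((cmod (\<Sum>p\<in>P. B p * cis (2*pi*(\<eta> p \<bullet> x))))^2)
     = (\<Sum>p\<in>P. \<Sum>q\<in>P. (B p * cnj (B q)) * cis (2*pi*((\<eta> p - \<eta> q) \<bullet> x)))"
proof -
  have "complex_of_real ((cmod (\<Sum>p\<in>P. B p * cis (2*pi*(\<eta> p \<bullet> x))))^2)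
      = (\<Sum>p\<in>P. B p * cis (2*pi*(\<eta> p \<bullet> x))) * cnj (\<Sum>p\<in>P. B p * cis (2*pi*(\<eta> p \<bullet> x)))"
    by (rule complex_norm_square)
  also have "\<dots> = (\<Sum>p\<in>P. \<Sum>q\<in>P. (B p * cis (2*pi*(\<eta> p \<bullet> x))) * (cnj (B q) * cis (- (2*pi*(\<eta> q \<bullet> x)))))"
    by (simp add: sum_product cis_cnj)
  also have "\<dots> = (\<Sum>p\<in>P. \<Sum>q\<in>P. (B p * cnj (B q)) * cis (2*pi*((\<eta> p - \<eta> q) \<bullet> x)))"
    by (intro sum.cong refl) (simp add: mult_ac cis_mult inner_diff_left right_diff_distrib)
  finally show ?thesis .
qed


definition Kb :: "'a::euclidean_space \<Rightarrow> real" where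
  "Kb \<zeta> = (\<Prod>b\<in>Basis. 64 / (1 + (\<zeta> \<bullet> b)^2))"

lemma weighted_bound:
  fixes S :: "(real^2) set" and a :: "real^2 \<Rightarrow> complex" and c :: "real^2"
  assumes "finite S"
  shows "(\<integral>x. W c x * (cmod (exp_sum S a x))^4 \<partial>lborel)
    \<le> (\<Sum>p\<in>S\<times>S. \<Sum>q\<in>S\<times>S. (cmod (a (fst p)) * cmod (a (snd p))) * (cmod (a (fst q)) * cmod (a (snd q)))
           * Kb ((fst p + snd p) - (fst q + snd q)))"
proof -
  define P where "P = S \<times> S"
  define B where "B = (\<lambda>p. a (fst p) * a (snd p))"
  define \<eta> where "\<eta> = (\<lambda>p::(real^2)\<times>(real^2). fst p + snd p)"
  have fP: "finite P" using assms by (simp add: P_def)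
  have pt: "complex_of_real (W c x * (cmod (exp_sum S a x))^4) =
      (\<Sum>p\<in>P. \<Sum>q\<in>P. (B p * cnj (B q)) * (of_real (W c x) * cis (2*pi*((\<eta> p - \<eta> q) \<bullet> x))))" for x
  proof -
    have "(cmod (exp_sum S a x))^4 = (cmod ((exp_sum S a x)^2))^2"
      by (simp add: norm_power power_mult[symmetric])
    also have "(exp_sum S a x)^2 = (\<Sum>p\<in>P. B p * cis (2*pi*(\<eta> p \<bullet> x)))"
      unfolding exp_sum_sq P_def B_def \<eta>_def ..
    finally have "complex_of_real ((cmod (exp_sum S a x))^4) = (\<Sum>p\<in>P. \<Sum>q\<in>P. (B p * cnj (B q)) * cis (2*pi*((\<eta> p - \<eta> q) \<bullet> x)))"
      using norm4_expand[of B \<eta> x P] by (simp del: of_real_power)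
    then show ?thesis
      by (simp add: sum_distrib_left mult_ac)
  qed
  have "(\<integral>x. W c x * (cmod (exp_sum S a x))^4 \<partial>lborel)
      = Re (complex_of_real (\<integral>x. W c x * (cmod (exp_sum S a x))^4 \<partial>lborel))" by simp
  also have "complex_of_real (\<integral>x. W c x * (cmod (exp_sum S a x))^4 \<partial>lborel)
      = (\<integral>x. complex_of_real (W c x * (cmod (exp_sum S a x))^4) \<partial>lborel)"
    by (rule integral_complex_of_real[symmetric])
  also have "\<dots> = (\<integral>x. (\<Sum>p\<in>P. \<Sum>q\<in>P. (B p * cnj (B q)) * (of_real (W c x) * cis (2*pi*((\<eta> p - \<eta> q) \<bullet> x)))) \<partial>lborel)"
    by (simp only: pt)
  also have "\<dots> = (\<Sum>p\<in>P. \<Sum>q\<in>P. (B p * cnj (B q)) * (\<integral>x. of_real (W c x) * cis (2*pi*((\<eta> p - \<eta> q) \<bullet> x)) \<partial>lborel))"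
    by (simp add: Bochner_Integration.integral_sum integrable_W_cis integrable_sum integrable_mult_right)
  finally have eq: "(\<integral>x. W c x * (cmod (exp_sum S a x))^4 \<partial>lborel) = Re (\<Sum>p\<in>P. \<Sum>q\<in>P. (B p * cnj (B q)) * (\<integral>x. of_real (W c x) * cis (2*pi*((\<eta> p - \<eta> q) \<bullet> x)) \<partial>lborel))" .
  also have "\<dots> \<le> cmod (\<Sum>p\<in>P. \<Sum>q\<in>P. (B p * cnj (B q)) * (\<integral>x. of_real (W c x) * cis (2*pi*((\<eta> p - \<eta> q) \<bullet> x)) \<partial>lborel))"
    by (rule complex_Re_le_cmod)
  also have "\<dots> \<le> (\<Sum>p\<in>P. \<Sum>q\<in>P. cmod ((B p * cnj (B q)) * (\<integral>x. of_real (W c x) * cis (2*pi*((\<eta> p - \<eta> q) \<bullet> x)) \<partial>lborel)))"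
    by (rule order_trans[OF norm_sum sum_mono]) (rule norm_sum)
  also have "\<dots> \<le> (\<Sum>p\<in>P. \<Sum>q\<in>P. (cmod (a (fst p)) * cmod (a (snd p))) * (cmod (a (fst q)) * cmod (a (snd q)))
           * Kb (\<eta> p - \<eta> q))"
    unfolding norm_mult B_def complex_mod_cnj
    by (intro sum_mono mult_left_mono) (auto simp: Kb_def intro!: W_ft_bound)
  finally show ?thesis unfolding P_def \<eta>_def .
qed


lemma continuous_exp_sum: "continuous_on UNIV (exp_sum S a)"
  unfolding exp_sum_def by (intro continuous_intros)

lemma square_bound:
  fixes S :: "(real^2) set" and a :: "real^2 \<Rightarrow> complex"
  assumes "unit_square Q"
  shows "\<exists>c. (LINT x:Q|lborel. (cmod (exp_sum S a x))^4) \<le> (1/4) * (\<integral>x. W c x * (cmod (exp_sum S a x))^4 \<partial>lborel)"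
proof -
  obtain c u v :: "real^2" where uv: "norm u = 1" "norm v = 1"
    and Q: "Q = {c + s *\<^sub>R u + t *\<^sub>R v | s t. s \<in> {0..1} \<and> t \<in> {0..1}}"
    using assms unfolding unit_square_def by blast
  define f where "f = (\<lambda>x. (cmod (exp_sum S a x))^4)"
  have contf: "continuous_on UNIV f"
    unfolding f_def by (intro continuous_intros continuous_on_compose2[OF continuous_exp_sum]) auto
  have Qeq: "Q = (\<lambda>p. c + fst p *\<^sub>R u + snd p *\<^sub>R v) ` ({0..1} \<times> {0..1})"
    unfolding Q by force
  have cQ: "compact Q" unfolding Qeq
    by (intro compact_continuous_image compact_Times compact_Icc continuous_intros)
  have i1: "integrable lborel (\<lambda>x. indicator Q x *\<^sub>R f x)"
    by (rule borel_integrable_compact[OF cQ]) (rule continuous_on_subset[OF contf], auto)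
  have i2: "integrable lborel (\<lambda>x. 1/4 * (W c x * f x))"
    apply (rule integrable_mult_right)
    apply (rule integrable_compact_support[OF compact_cbox, of _ "c - (\<Sum>b\<in>Basis. 4 *\<^sub>R b)" "c + (\<Sum>b\<in>Basis. 4 *\<^sub>R b)"])
    by (auto simp: W_zero_outside intro!: continuous_intros continuous_on_compose2[OF continuous_W]
             continuous_on_compose2[OF contf])
  have W4: "W c x \<ge> 4" if "x \<in> Q" for x
  proof -
    from that obtain s t where st: "s \<in> {0..1}" "t \<in> {0..1}" "x = c + s *\<^sub>R u + t *\<^sub>R v"
      unfolding Q by blast
    have "norm (x - c) \<le> norm (s *\<^sub>R u) + norm (t *\<^sub>R v)"
      using st(3) norm_triangle_ineq[of "s *\<^sub>R u" "t *\<^sub>R v"] by simp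
    also have "\<dots> \<le> 2" using st(1,2) uv by simp
    finally have nx: "norm (x - c) \<le> 2" .
    have "(\<Prod>b\<in>(Basis::(real^2) set). (2::real)) \<le> W c x"
      unfolding W_def
    proof (intro prod_mono conjI)
      fix b :: "real^2" assume b: "b \<in> Basis"
      have "\<bar>(x - c) \<bullet> b\<bar> \<le> norm (x - c)" by (rule Basis_le_norm[OF b])
      then show "2 \<le> tri (x \<bullet> b - c \<bullet> b)" using nx by (auto simp: tri_def inner_diff_left)
    qed simp
    then show ?thesis by simp
  qed
  have "(LINT x:Q|lborel. f x) = (\<integral>x. indicator Q x *\<^sub>R f x \<partial>lborel)"
    by (simp add: set_lebesgue_integral_def)
  also have "\<dots> \<le> (\<integral>x. 1/4 * (W c x * f x) \<partial>lborel)"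
  proof (rule integral_mono[OF i1 i2])
    fix x
    have f0: "0 \<le> f x" by (simp add: f_def)
    show "indicator Q x *\<^sub>R f x \<le> 1/4 * (W c x * f x)"
    proof (cases "x \<in> Q")
      case True
      then have "1 * f x \<le> (1/4 * W c x) * f x" using W4[OF True] f0 by (intro mult_right_mono) auto
      then show ?thesis using True by simp
    next
      case False
      then show ?thesis using f0 W_nonneg[of c x] by simp
    qed
  qed
  also have "\<dots> = 1/4 * (\<integral>x. W c x * f x \<partial>lborel)" by simp
  finally show ?thesis unfolding f_def by blast
qed


lemma cross_identity:
  fixes h h' w :: "real^2"
  assumes "h \<bullet> w = 0"
  shows "(w \<bullet> w) * ((h \<bullet> h) * (h' \<bullet> h') - (h \<bullet> h')^2) = (h \<bullet> h) * (h' \<bullet> w)^2"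
proof -
  have hw: "h$1 * w$1 + h$2 * w$2 = 0" using assms by (simp add: inner_vec_def sum_2)
  have "(w$1*w$1 + w$2*w$2) * ((h$1*h$1 + h$2*h$2) * (h'$1*h'$1 + h'$2*h'$2) - (h$1*h'$1 + h$2*h'$2)^2)
     = (h$1*h$1 + h$2*h$2) * (h'$1*w$1 + h'$2*w$2)^2"
    using hw by algebra
  then show ?thesis by (simp add: inner_vec_def sum_2)
qed

lemma xy_bound:
  fixes x y R :: real
  assumes "0 \<le> x" "0 \<le> y" "x * y \<le> 5 * R * (x + y)" "0 \<le> R"
  shows "x \<le> 10 * R \<or> y \<le> 10 * R"
proof (rule ccontr)
  assume "\<not> (x \<le> 10 * R \<or> y \<le> 10 * R)"
  then have a: "10 * R < x" "10 * R < y" by auto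
  have "10 * R * x \<le> y * x" using a assms by (intro mult_right_mono) auto
  moreover have "10 * R * y < x * y" using a assms by (intro mult_strict_right_mono) auto
  ultimately show False using assms(3) by (simp add: algebra_simps)
qed

lemma pair_close:
  fixes j k l m :: "real^2" and R :: real
  assumes nj: "norm j = R" and nk: "norm k = R" and nl: "norm l = R" and nm: "norm m = R" and R: "R > 0"
    and cl: "norm ((j + k) - (l + m)) \<le> 2" and far: "norm (j + k) > sqrt R"
  shows "dist l j \<le> sqrt (10*R) + 1 \<or> dist l k \<le> sqrt (10*R) + 1"
proof -
  define w where "w = j + k"
  define w' where "w' = l + m"
  define h where "h = (1/2) *\<^sub>R (j - k)"
  define h' where "h' = (1/2) *\<^sub>R (l - m)"
  have jj: "j \<bullet> j = R^2" "k \<bullet> k = R^2" "l \<bullet> l = R^2" "m \<bullet> m = R^2"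
    using nj nk nl nm by (simp_all add: power2_norm_eq_inner[symmetric])
  have hw: "h \<bullet> w = 0" unfolding h_def w_def using jj by (simp add: algebra_simps inner_commute)
  have hw': "h' \<bullet> w' = 0" unfolding h'_def w'_def using jj by (simp add: algebra_simps inner_commute)
  have sum1: "h \<bullet> h + (w \<bullet> w) / 4 = R^2" unfolding h_def w_def using jj
    by (simp add: inner_add_left inner_add_right inner_diff_left inner_diff_right inner_commute field_simps)
  have sum2: "h' \<bullet> h' + (w' \<bullet> w') / 4 = R^2" unfolding h'_def w'_def using jj
    by (simp add: inner_add_left inner_add_right inner_diff_left inner_diff_right inner_commute field_simps)
  define u where "u = h \<bullet> h"
  define v where "v = h' \<bullet> h'"
  have u0: "0 \<le> u" "0 \<le> v" by (simp_all add: u_def v_def)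
  have ww0: "0 \<le> w \<bullet> w" "0 \<le> w' \<bullet> w'" by simp_all
  have uR: "u \<le> R^2" "v \<le> R^2" using sum1 sum2 ww0 unfolding u_def v_def by linarith+
  have dd: "norm (w - w') \<le> 2" using cl by (simp add: w_def w'_def)
  have nw: "norm w \<le> 2 * R" unfolding w_def using norm_triangle_ineq[of j k] nj nk by simp
  have nw': "norm w' \<le> 2 * R" unfolding w'_def using norm_triangle_ineq[of l m] nl nm by simp
  have wR: "R < w \<bullet> w"
  proof -
    have "sqrt R ^ 2 < (norm w)^2" using far R by (intro power_strict_mono) (auto simp: w_def)
    then show ?thesis using R by (simp add: power2_norm_eq_inner)
  qed
  define G where "G = u * v - (h \<bullet> h')^2"
  have G0: "0 \<le> G"
  proof -
    have "\<bar>h \<bullet> h'\<bar> \<le> norm h * norm h'" by (rule Cauchy_Schwarz_ineq2)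
    then have "(h \<bullet> h')^2 \<le> (norm h * norm h')^2"
      by (metis abs_ge_zero power2_abs power_mono)
    then show ?thesis by (simp add: G_def u_def v_def power_mult_distrib power2_norm_eq_inner)
  qed
  have cross: "(w \<bullet> w) * G = u * (h' \<bullet> w)^2"
    unfolding G_def u_def v_def by (rule cross_identity[OF hw])
  have hw2: "(h' \<bullet> w)^2 \<le> 4 * v"
  proof -
    have "h' \<bullet> w = h' \<bullet> (w - w')" using hw' by (simp add: inner_diff_right)
    then have "\<bar>h' \<bullet> w\<bar> \<le> norm h' * norm (w - w')" by (simp add: Cauchy_Schwarz_ineq2)
    also have "\<dots> \<le> norm h' * 2" using dd by (simp add: mult_left_mono)
    finally have "(h' \<bullet> w)^2 \<le> (norm h' * 2)^2"
      by (metis abs_ge_zero power2_abs power_mono)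
    then show ?thesis by (simp add: v_def power_mult_distrib power2_norm_eq_inner)
  qed
  have GR: "R * G \<le> 4 * u * v"
  proof -
    have "R * G \<le> (w \<bullet> w) * G" using wR G0 by (intro mult_right_mono) auto
    also have "\<dots> = u * (h' \<bullet> w)^2" by (rule cross)
    also have "\<dots> \<le> u * (4 * v)" using hw2 u0 by (intro mult_left_mono) auto
    finally show ?thesis by simp
  qed
  have uv_diff: "\<bar>u - v\<bar> \<le> 2 * R"
  proof -
    have "u - v = ((w' \<bullet> w') - (w \<bullet> w)) / 4" using sum1 sum2 by (simp add: u_def v_def)
    also have "(w' \<bullet> w') - (w \<bullet> w) = (w' - w) \<bullet> (w' + w)" by (simp add: algebra_simps inner_commute)
    finally have e: "u - v = ((w' - w) \<bullet> (w' + w)) / 4" .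
    have "\<bar>(w' - w) \<bullet> (w' + w)\<bar> \<le> norm (w' - w) * norm (w' + w)" by (rule Cauchy_Schwarz_ineq2)
    also have "\<dots> \<le> 2 * (4 * R)"
    proof (rule mult_mono)
      show "norm (w' - w) \<le> 2" using dd by (simp add: norm_minus_commute)
      show "norm (w' + w) \<le> 4 * R" using norm_triangle_ineq[of w' w] nw nw' by simp
    qed auto
    finally show ?thesis unfolding e by simp
  qed
  define x where "x = (h - h') \<bullet> (h - h')"
  define y where "y = (h + h') \<bullet> (h + h')"
  have x0: "0 \<le> x" "0 \<le> y" by (simp_all add: x_def y_def)
  have xy_eq: "x * y = (u - v)^2 + 4 * G"
    unfolding x_def y_def G_def u_def v_def by (simp add: algebra_simps inner_commute power2_eq_square)
  have xpy: "x + y = 2 * (u + v)"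
    unfolding x_def y_def u_def v_def by (simp add: algebra_simps inner_commute)
  have t1: "(u - v)^2 \<le> 2 * R * (u + v)"
  proof -
    have "(u - v)^2 = \<bar>u - v\<bar> * \<bar>u - v\<bar>" by (simp add: power2_eq_square)
    also have "\<dots> \<le> (2 * R) * (u + v)" using uv_diff u0 by (intro mult_mono) auto
    finally show ?thesis by simp
  qed
  have t2: "4 * G \<le> 8 * R * (u + v)"
  proof -
    have "R * (4 * G) \<le> 16 * u * v" using GR by (simp add: mult_ac)
    also have "16 * u * v \<le> 4 * (u + v) * (u + v)"
    proof -
      have "0 \<le> (u - v)^2" by simp
      then show ?thesis by (simp add: algebra_simps power2_eq_square)
    qed
    also have "\<dots> \<le> 4 * (u + v) * (2 * R^2)" using uR u0 by (intro mult_left_mono) auto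
    also have "\<dots> = R * (8 * R * (u + v))" by (simp add: power2_eq_square)
    finally show ?thesis using R by simp
  qed
  have "x * y \<le> 5 * R * (x + y)" using t1 t2 unfolding xy_eq xpy by (simp add: algebra_simps)
  then have "x \<le> 10 * R \<or> y \<le> 10 * R" using x0 R by (intro xy_bound) auto
  moreover have "dist l j \<le> 1 + sqrt x"
  proof -
    have "l - j = (1/2) *\<^sub>R (w' - w) - (h - h')"
      unfolding w_def w'_def h_def h'_def by (simp add: vec_eq_iff field_simps)
    then have "dist l j \<le> norm ((1/2) *\<^sub>R (w' - w)) + norm (h - h')"
      using norm_triangle_ineq4[of "(1/2) *\<^sub>R (w' - w)" "h - h'"] by (simp add: dist_norm)
    moreover have "norm ((1/2) *\<^sub>R (w' - w)) \<le> 1" using dd by (simp add: norm_minus_commute)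
    moreover have "norm (h - h') = sqrt x" by (simp add: x_def norm_eq_sqrt_inner)
    ultimately show ?thesis by simp
  qed
  moreover have "dist l k \<le> 1 + sqrt y"
  proof -
    have "l - k = (1/2) *\<^sub>R (w' - w) + (h + h')"
      unfolding w_def w'_def h_def h'_def by (simp add: vec_eq_iff field_simps)
    then have "dist l k \<le> norm ((1/2) *\<^sub>R (w' - w)) + norm (h + h')"
      using norm_triangle_ineq[of "(1/2) *\<^sub>R (w' - w)" "h + h'"] by (simp add: dist_norm)
    moreover have "norm ((1/2) *\<^sub>R (w' - w)) \<le> 1" using dd by (simp add: norm_minus_commute)
    moreover have "norm (h + h') = sqrt y" by (simp add: y_def norm_eq_sqrt_inner)
    ultimately show ?thesis by simp
  qed
  ultimately show ?thesis by (auto intro: order_trans)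
qed


lemma same_cell_dist:
  fixes \<xi> \<eta> :: "real^2" and s :: real
  assumes s: "s > 0" and c1: "\<lfloor>\<xi>$1/s\<rfloor> = \<lfloor>\<eta>$1/s\<rfloor>" and c2: "\<lfloor>\<xi>$2/s\<rfloor> = \<lfloor>\<eta>$2/s\<rfloor>"
  shows "dist \<xi> \<eta> \<le> sqrt (2 * s^2)"
proof -
  have d: "\<bar>\<xi>$i - \<eta>$i\<bar> \<le> s" if "\<lfloor>\<xi>$i/s\<rfloor> = \<lfloor>\<eta>$i/s\<rfloor>" for i
  proof -
    have "\<bar>\<xi>$i/s - \<eta>$i/s\<bar> < 1"
      using that of_int_floor_le[of "\<xi>$i/s"] real_of_int_floor_add_one_gt[of "\<xi>$i/s"]
        of_int_floor_le[of "\<eta>$i/s"] real_of_int_floor_add_one_gt[of "\<eta>$i/s"]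
      by (simp add: abs_less_iff) linarith
    then have "\<bar>(\<xi>$i - \<eta>$i)/s\<bar> \<le> 1" by (simp add: diff_divide_distrib)
    then show ?thesis using s by (simp add: abs_divide divide_le_eq)
  qed
  have "(dist \<xi> \<eta>)^2 = (\<xi>$1 - \<eta>$1)^2 + (\<xi>$2 - \<eta>$2)^2"
    unfolding dist_norm power2_norm_eq_inner by (simp add: inner_vec_def sum_2 power2_eq_square)
  also have "\<dots> \<le> s^2 + s^2"
  proof (intro add_mono)
    show "(\<xi>$1 - \<eta>$1)^2 \<le> s^2" using power_mono[OF d[OF c1], of 2] by (simp add: power2_abs)
    show "(\<xi>$2 - \<eta>$2)^2 \<le> s^2" using power_mono[OF d[OF c2], of 2] by (simp add: power2_abs)
  qed
  finally have "(dist \<xi> \<eta>)^2 \<le> 2 * s^2" by simp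
  then show ?thesis by (simp add: real_le_rsqrt)
qed


lemma card_fiber_le_M:
  fixes S :: "(real^2) set"
  assumes fin: "finite S" and R: "R > 0" and sub: "T \<subseteq> S" and eta: "\<eta> \<in> T"
    and close: "\<And>\<xi>. \<xi> \<in> T \<Longrightarrow> dist \<xi> \<eta> \<le> sqrt R"
  shows "card T \<le> cap_mult R S"
proof -
  have "card T \<le> card {\<xi>\<in>S. dist \<xi> \<eta> \<le> sqrt R}"
    by (rule card_mono) (use fin sub close in auto)
  also have "\<dots> \<le> cap_mult R S"
    unfolding cap_mult_def using fin sub eta by (intro Max_ge) auto
  finally show ?thesis .
qed

lemma local_count:
  fixes S :: "(real^2) set" and y :: "real^2"
  assumes fin: "finite S" and R: "R > 0" and r: "r \<ge> 0"
  shows "real (card {\<xi>\<in>S. dist \<xi> y \<le> r}) \<le> (2 * r / sqrt (R/2) + 2)^2 * real (cap_mult R S)"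
proof -
  define s where "s = sqrt (R/2)"
  have s0: "s > 0" using R by (simp add: s_def)
  have s2: "2 * s^2 = R" using R by (simp add: s_def)
  define T where "T = {\<xi>\<in>S. dist \<xi> y \<le> r}"
  define g where "g = (\<lambda>\<xi>::real^2. (\<lfloor>\<xi>$1/s\<rfloor>, \<lfloor>\<xi>$2/s\<rfloor>))"
  define I1 where "I1 = {\<lfloor>(y$1 - r)/s\<rfloor>..\<lfloor>(y$1 + r)/s\<rfloor>}"
  define I2 where "I2 = {\<lfloor>(y$2 - r)/s\<rfloor>..\<lfloor>(y$2 + r)/s\<rfloor>}"
  have fT: "finite T" using fin by (simp add: T_def)
  have gT: "g ` T \<subseteq> I1 \<times> I2"
  proof
    fix z assume "z \<in> g ` T"
    then obtain \<xi> where \<xi>: "\<xi> \<in> T" "z = g \<xi>" by auto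
    have "\<bar>\<xi>$i - y$i\<bar> \<le> r" for i
    proof -
      have "\<bar>(\<xi> - y)$i\<bar> \<le> norm (\<xi> - y)" by (rule component_le_norm_cart)
      then show ?thesis using \<xi>(1) by (simp add: T_def dist_norm)
    qed
    then have b: "y$i - r \<le> \<xi>$i" "\<xi>$i \<le> y$i + r" for i
      using abs_le_iff[of "\<xi>$i - y$i" r] by (fastforce+)
    have "(y$i - r)/s \<le> \<xi>$i/s" "\<xi>$i/s \<le> (y$i + r)/s" for i
      using b s0 by (auto intro: divide_right_mono)
    then have "\<lfloor>(y$i - r)/s\<rfloor> \<le> \<lfloor>\<xi>$i/s\<rfloor>" "\<lfloor>\<xi>$i/s\<rfloor> \<le> \<lfloor>(y$i + r)/s\<rfloor>" for i
      by (auto intro: floor_mono)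
    then show "z \<in> I1 \<times> I2" using \<xi>(2) by (auto simp: g_def I1_def I2_def)
  qed
  have cardI: "real (card {\<lfloor>(y$i - r)/s\<rfloor>..\<lfloor>(y$i + r)/s\<rfloor>}) \<le> 2 * r / s + 2" for i
  proof -
    have "real (card {\<lfloor>(y$i - r)/s\<rfloor>..\<lfloor>(y$i + r)/s\<rfloor>}) = real (nat (\<lfloor>(y$i + r)/s\<rfloor> - \<lfloor>(y$i - r)/s\<rfloor> + 1))"
      by simp
    also have "\<dots> \<le> 2 * r / s + 2"
    proof -
      have "\<lfloor>(y$i + r)/s\<rfloor> - \<lfloor>(y$i - r)/s\<rfloor> + 1 \<ge> 0"
      proof -
        have "(y$i - r)/s \<le> (y$i + r)/s" using r s0 by (intro divide_right_mono) auto
        then show ?thesis using floor_mono by fastforce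
      qed
      moreover have "real_of_int (\<lfloor>(y$i + r)/s\<rfloor> - \<lfloor>(y$i - r)/s\<rfloor> + 1) \<le> 2 * r / s + 2"
      proof -
        have "real_of_int \<lfloor>(y$i + r)/s\<rfloor> \<le> (y$i + r)/s" by (rule of_int_floor_le)
        moreover have "(y$i - r)/s < real_of_int \<lfloor>(y$i - r)/s\<rfloor> + 1" by (rule real_of_int_floor_add_one_gt)
        moreover have "(y$i + r)/s - (y$i - r)/s = 2 * r / s" by (simp add: diff_divide_distrib[symmetric])
        ultimately show ?thesis by (simp only: of_int_add of_int_diff of_int_1)
      qed
      ultimately show ?thesis by simp
    qed
    finally show ?thesis .
  qed
  have fiber: "card {\<xi>\<in>T. g \<xi> = z} \<le> cap_mult R S" if "z \<in> g ` T" for z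
  proof -
    from that obtain \<eta> where \<eta>: "\<eta> \<in> T" "g \<eta> = z" by auto
    show ?thesis
    proof (rule card_fiber_le_M[OF fin R _ _])
      show "{\<xi>\<in>T. g \<xi> = z} \<subseteq> S" by (auto simp: T_def)
      show "\<eta> \<in> {\<xi>\<in>T. g \<xi> = z}" using \<eta> by auto
      fix \<xi> assume "\<xi> \<in> {\<xi>\<in>T. g \<xi> = z}"
      then have "g \<xi> = g \<eta>" using \<eta> by auto
      then have "dist \<xi> \<eta> \<le> sqrt (2 * s^2)" using s0 by (intro same_cell_dist) (auto simp: g_def)
      then show "dist \<xi> \<eta> \<le> sqrt R" using s2 by simp
    qed
  qed
  have "card T = (\<Sum>z\<in>g ` T. card {\<xi>\<in>T. g \<xi> = z})"
  proof -
    have "(\<Sum>z\<in>g ` T. \<Sum>\<xi>\<in>{x. x \<in> T \<and> g x = z}. (1::nat)) = (\<Sum>\<xi>\<in>T. 1)"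
      by (rule sum.group[OF fT]) (use fT in auto)
    then show ?thesis by simp
  qed
  also have "\<dots> \<le> (\<Sum>z\<in>g ` T. cap_mult R S)" by (rule sum_mono) (rule fiber)
  also have "\<dots> = card (g ` T) * cap_mult R S" by simp
  also have "\<dots> \<le> card (I1 \<times> I2) * cap_mult R S"
    by (intro mult_right_mono card_mono gT) (auto simp: I1_def I2_def)
  finally have "real (card T) \<le> real (card I1) * real (card I2) * real (cap_mult R S)"
    by (simp add: card_cartesian_product of_nat_mult[symmetric] del: of_nat_mult)
  also have "\<dots> \<le> (2 * r / s + 2) * (2 * r / s + 2) * real (cap_mult R S)"
    unfolding I1_def I2_def by (intro mult_right_mono mult_mono cardI) (use r s0 in auto)
  finally show ?thesis by (simp add: T_def s_def power2_eq_square)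
qed

lemma count300:
  fixes S :: "(real^2) set" and y :: "real^2"
  assumes fin: "finite S" and R: "R > 0" and circ: "\<forall>\<xi>\<in>S. norm \<xi> = R" and r: "r \<ge> 0"
    and rb: "R \<ge> 1 \<Longrightarrow> r \<le> 5 * sqrt R"
  shows "real (card {\<xi>\<in>S. dist \<xi> y \<le> r}) \<le> 300 * real (cap_mult R S)"
proof (cases "R \<ge> 1")
  case True
  have sR: "0 < sqrt (R/2)" using R by simp
  have "(10 * sqrt R)^2 \<le> (15 * sqrt (R/2))^2" using R less_imp_le[OF R] by (simp add: power_mult_distrib)
  then have "10 * sqrt R \<le> 15 * sqrt (R/2)" by (rule power2_le_imp_le) (use R in simp)
  then have "2 * r \<le> 15 * sqrt (R/2)" using rb[OF True] by linarith
  then have q: "2 * r / sqrt (R/2) \<le> 15" using sR by (simp add: divide_le_eq)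
  have q0: "0 \<le> 2 * r / sqrt (R/2)" using r sR by simp
  have "(2 * r / sqrt (R/2) + 2)^2 \<le> 17^2" using q q0 by (intro power_mono) auto
  then have "(2 * r / sqrt (R/2) + 2)^2 \<le> 300" by simp
  then have "(2 * r / sqrt (R/2) + 2)^2 * real (cap_mult R S) \<le> 300 * real (cap_mult R S)"
    by (intro mult_right_mono) auto
  with local_count[OF fin R r, of y] show ?thesis by linarith
next
  case False
  have sR: "0 < sqrt (R/2)" using R by simp
  have "(2 * R)^2 \<le> (3 * sqrt (R/2))^2" using R False by (simp add: power_mult_distrib power2_eq_square)
  then have "2 * R \<le> 3 * sqrt (R/2)" by (rule power2_le_imp_le) (use R in simp)
  then have q: "2 * R / sqrt (R/2) \<le> 3" using sR by (simp add: divide_le_eq)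
  have q0: "0 \<le> 2 * R / sqrt (R/2)" using R sR by simp
  have "(2 * R / sqrt (R/2) + 2)^2 \<le> 5^2" using q q0 by (intro power_mono) auto
  then have "(2 * R / sqrt (R/2) + 2)^2 \<le> 300" by simp
  then have b: "(2 * R / sqrt (R/2) + 2)^2 * real (cap_mult R S) \<le> 300 * real (cap_mult R S)"
    by (intro mult_right_mono) auto
  have "card {\<xi>\<in>S. dist \<xi> y \<le> r} \<le> card {\<xi>\<in>S. dist \<xi> 0 \<le> R}"
    using fin circ by (intro card_mono) auto
  then have "real (card {\<xi>\<in>S. dist \<xi> y \<le> r}) \<le> real (card {\<xi>\<in>S. dist \<xi> 0 \<le> R})" by simp
  also have "\<dots> \<le> (2 * R / sqrt (R/2) + 2)^2 * real (cap_mult R S)"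
    by (rule local_count[OF fin R]) (use R in simp)
  finally show ?thesis using b by linarith
qed


lemma sym_amgm:
  fixes f :: "'b \<Rightarrow> real"
  assumes fin: "finite P" and sym: "\<And>p q. r p q = r q p" and f0: "\<And>p. f p \<ge> 0"
  shows "(\<Sum>p\<in>P. \<Sum>q\<in>P. if r p q then f p * f q else 0) \<le> (\<Sum>p\<in>P. (f p)^2 * real (card {q\<in>P. r p q}))"
proof -
  have "(\<Sum>p\<in>P. \<Sum>q\<in>P. if r p q then f p * f q else 0)
      \<le> (\<Sum>p\<in>P. \<Sum>q\<in>P. if r p q then ((f p)^2 + (f q)^2) / 2 else 0)"
  proof (intro sum_mono)
    fix p q
    have "0 \<le> (f p - f q)^2" by simp
    then have "f p * f q \<le> ((f p)^2 + (f q)^2) / 2" by (simp add: power2_eq_square algebra_simps)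
    then show "(if r p q then f p * f q else 0) \<le> (if r p q then ((f p)^2 + (f q)^2) / 2 else 0)" by simp
  qed
  also have "\<dots> = (\<Sum>p\<in>P. \<Sum>q\<in>P. ((if r p q then (f p)^2 else 0) + (if r p q then (f q)^2 else 0)) / 2)"
    by (intro sum.cong refl) simp
  also have "\<dots> = ((\<Sum>p\<in>P. \<Sum>q\<in>P. if r p q then (f p)^2 else 0) + (\<Sum>p\<in>P. \<Sum>q\<in>P. if r p q then (f q)^2 else 0)) / 2"
    by (simp add: sum_divide_distrib[symmetric] sum.distrib)
  also have "(\<Sum>p\<in>P. \<Sum>q\<in>P. if r p q then (f q)^2 else 0) = (\<Sum>p\<in>P. \<Sum>q\<in>P. if r p q then (f p)^2 else 0)"
    by (subst sum.swap) (simp add: sym)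
  also have "(\<Sum>p\<in>P. \<Sum>q\<in>P. if r p q then (f p)^2 else 0) = (\<Sum>p\<in>P. (f p)^2 * real (card {q\<in>P. r p q}))"
  proof (intro sum.cong refl)
    fix p
    have "(\<Sum>q\<in>P. if r p q then (f p)^2 else 0) = (\<Sum>q\<in>{q\<in>P. r p q}. (f p)^2)"
      using fin by (simp add: sum.inter_filter[symmetric])
    then show "(\<Sum>q\<in>P. if r p q then (f p)^2 else 0) = (f p)^2 * real (card {q\<in>P. r p q})" by simp
  qed
  finally show ?thesis by simp
qed


lemma radius_D:
  assumes "R \<ge> 1"
  shows "sqrt (10*R) + 1 \<le> 5 * sqrt R" and "2 \<le> 5 * sqrt R" and "sqrt R + 2 \<le> 5 * sqrt R"
proof -
  have s1: "1 \<le> sqrt R" using assms by simp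
  have "sqrt (10*R) = sqrt 10 * sqrt R" by (simp add: real_sqrt_mult)
  also have "sqrt 10 \<le> 4" by (rule real_le_lsqrt) auto
  then have "sqrt 10 * sqrt R \<le> 4 * sqrt R" using assms by (intro mult_right_mono) auto
  finally show "sqrt (10*R) + 1 \<le> 5 * sqrt R" using s1 by linarith
  show "2 \<le> 5 * sqrt R" using s1 by linarith
  show "sqrt R + 2 \<le> 5 * sqrt R" using s1 by linarith
qed

lemma deg_bound:
  fixes S :: "(real^2) set" and j k :: "real^2"
  assumes fin: "finite S" and R: "R > 0" and circ: "\<forall>\<xi>\<in>S. norm \<xi> = R"
    and j: "j \<in> S" and k: "k \<in> S" and far: "norm (j + k) > sqrt R"
  shows "real (card {q\<in>S\<times>S. norm ((j + k) - (fst q + snd q)) \<le> 2}) \<le> 180000 * (real (cap_mult R S))^2"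
proof -
  define M where "M = real (cap_mult R S)"
  define D where "D = sqrt (10*R) + 1"
  have D0: "D \<ge> 0" using R by (simp add: D_def add_nonneg_nonneg)
  define L where "L = {l\<in>S. dist l j \<le> D} \<union> {l\<in>S. dist l k \<le> D}"
  define B where "B = (\<lambda>l. {m\<in>S. dist m (j + k - l) \<le> 2})"
  have fL: "finite L" using fin by (simp add: L_def)
  have sub: "{q\<in>S\<times>S. norm ((j + k) - (fst q + snd q)) \<le> 2} \<subseteq> Sigma L B"
  proof
    fix q assume q: "q \<in> {q\<in>S\<times>S. norm ((j + k) - (fst q + snd q)) \<le> 2}"
    obtain l m where lm: "q = (l, m)" by (cases q)
    have lS: "l \<in> S" and mS: "m \<in> S" and cl: "norm ((j + k) - (l + m)) \<le> 2" using q lm by auto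
    have "dist l j \<le> sqrt (10*R) + 1 \<or> dist l k \<le> sqrt (10*R) + 1"
      by (rule pair_close[OF _ _ _ _ R cl far]) (use circ j k lS mS in auto)
    then have "l \<in> L" using lS by (auto simp: L_def D_def)
    moreover have "m \<in> B l"
    proof -
      have "dist m (j + k - l) = norm ((j + k) - (l + m))"
        by (simp add: dist_norm norm_minus_commute algebra_simps)
      then show ?thesis using mS cl by (simp add: B_def)
    qed
    ultimately show "q \<in> Sigma L B" using lm by auto
  qed
  have cB: "real (card (B l)) \<le> 300 * M" for l
    unfolding B_def M_def by (rule count300[OF fin R circ]) (auto dest: radius_D)
  have cL: "real (card L) \<le> 600 * M"
  proof -
    have "card L \<le> card {l\<in>S. dist l j \<le> D} + card {l\<in>S. dist l k \<le> D}"
      unfolding L_def by (rule card_Un_le)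
    then have "real (card L) \<le> real (card {l\<in>S. dist l j \<le> D}) + real (card {l\<in>S. dist l k \<le> D})"
      by linarith
    also have "\<dots> \<le> 300 * M + 300 * M"
      unfolding M_def by (intro add_mono count300[OF fin R circ D0]) (auto simp: D_def dest: radius_D)
    finally show ?thesis by simp
  qed
  have "card {q\<in>S\<times>S. norm ((j + k) - (fst q + snd q)) \<le> 2} \<le> card (Sigma L B)"
    by (rule card_mono[OF _ sub]) (use fL fin in \<open>auto simp: B_def\<close>)
  also have "card (Sigma L B) = (\<Sum>l\<in>L. card (B l))"
    by (rule card_SigmaI) (use fL fin in \<open>auto simp: B_def\<close>)
  finally have "real (card {q\<in>S\<times>S. norm ((j + k) - (fst q + snd q)) \<le> 2}) \<le> (\<Sum>l\<in>L. real (card (B l)))"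
    by (simp add: of_nat_sum[symmetric] del: of_nat_sum)
  also have "\<dots> \<le> (\<Sum>l\<in>L. 300 * M)" by (rule sum_mono) (rule cB)
  also have "\<dots> = real (card L) * (300 * M)" by simp
  also have "\<dots> \<le> (600 * M) * (300 * M)" by (intro mult_right_mono cL) (simp add: M_def)
  finally show ?thesis by (simp add: M_def power2_eq_square)
qed

lemma E_bound:
  fixes S :: "(real^2) set" and a :: "real^2 \<Rightarrow> complex"
  assumes fin: "finite S" and R: "R > 0" and circ: "\<forall>\<xi>\<in>S. norm \<xi> = R"
  shows "(\<Sum>p\<in>S\<times>S. \<Sum>q\<in>S\<times>S. if norm ((fst p + snd p) - (fst q + snd q)) \<le> 2
            then (cmod (a (fst p)) * cmod (a (snd p))) * (cmod (a (fst q)) * cmod (a (snd q))) else 0)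
     \<le> 270000 * (real (cap_mult R S))^2 * (\<Sum>j\<in>S. (cmod (a j))^2)^2"
proof -
  define M where "M = real (cap_mult R S)"
  have M0: "M \<ge> 0" by (simp add: M_def)
  define al where "al = (\<lambda>j. cmod (a j))"
  define A where "A = (\<lambda>p::(real^2)\<times>(real^2). al (fst p) * al (snd p))"
  define \<eta> where "\<eta> = (\<lambda>p::(real^2)\<times>(real^2). fst p + snd p)"
  define P where "P = S \<times> S"
  define \<rho> where "\<rho> = sqrt R + 2"
  define near where "near = (\<lambda>p. norm (\<eta> p) \<le> \<rho>)"
  define far2 where "far2 = (\<lambda>p q. norm (\<eta> p - \<eta> q) \<le> 2 \<and> norm (\<eta> p) > sqrt R \<and> norm (\<eta> q) > sqrt R)"
  define Sig where "Sig = (\<Sum>j\<in>S. (al j)^2)"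
  have fP: "finite P" using fin by (simp add: P_def)
  have al0: "al j \<ge> 0" for j by (simp add: al_def)
  have A0: "A p \<ge> 0" for p by (simp add: A_def al0)
  have Sig0: "Sig \<ge> 0" by (simp add: Sig_def sum_nonneg)
  have split: "(if norm (\<eta> p - \<eta> q) \<le> 2 then A p * A q else 0)
      \<le> (if near p \<and> near q then A p * A q else 0) + (if far2 p q then A p * A q else 0)" for p q
  proof (cases "norm (\<eta> p - \<eta> q) \<le> 2")
    case True
    show ?thesis
    proof (cases "near p \<and> near q")
      case True then show ?thesis using A0[of p] A0[of q] by (simp add: mult_nonneg_nonneg)
    next
      case False
      have t1: "norm (\<eta> p) \<le> norm (\<eta> q) + norm (\<eta> p - \<eta> q)" by (metis norm_triangle_sub add.commute)
      have t2: "norm (\<eta> q) \<le> norm (\<eta> p) + norm (\<eta> p - \<eta> q)" by (metis norm_triangle_sub norm_minus_commute add.commute)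
      have "far2 p q" using False True t1 t2 unfolding far2_def near_def \<rho>_def by auto
      then show ?thesis using True A0[of p] A0[of q] by simp
    qed
  next
    case False then show ?thesis using A0[of p] A0[of q] by (simp add: mult_nonneg_nonneg)
  qed
  have nearsum: "(\<Sum>p\<in>P. if near p then A p else 0) \<le> 300 * M * Sig"
  proof -
    have "(\<Sum>p\<in>P. if near p then A p else 0) = (\<Sum>j\<in>S. \<Sum>k\<in>S. if norm (j + k) \<le> \<rho> then al j * al k else 0)"
      unfolding P_def near_def \<eta>_def A_def by (simp add: sum.cartesian_product case_prod_beta)
    also have "\<dots> \<le> (\<Sum>j\<in>S. (al j)^2 * real (card {k\<in>S. norm (j + k) \<le> \<rho>}))"
      by (rule sym_amgm[OF fin _ al0]) (simp add: add.commute)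
    also have "\<dots> \<le> (\<Sum>j\<in>S. (al j)^2 * (300 * M))"
    proof (intro sum_mono mult_left_mono)
      fix j
      have "{k\<in>S. norm (j + k) \<le> \<rho>} = {k\<in>S. dist k (-j) \<le> \<rho>}"
        by (simp add: dist_norm add.commute)
      also have "real (card \<dots>) \<le> 300 * M"
        unfolding M_def by (rule count300[OF fin R circ]) (use R in \<open>auto simp: \<rho>_def dest: radius_D\<close>)
      finally show "real (card {k\<in>S. norm (j + k) \<le> \<rho>}) \<le> 300 * M" .
    qed simp
    also have "\<dots> = 300 * M * Sig" by (simp add: Sig_def sum_distrib_left[symmetric] sum_distrib_right[symmetric] mult_ac)
    finally show ?thesis .
  qed
  have part1: "(\<Sum>p\<in>P. \<Sum>q\<in>P. if near p \<and> near q then A p * A q else 0) \<le> (300 * M * Sig)^2"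
  proof -
    have "(\<Sum>p\<in>P. \<Sum>q\<in>P. if near p \<and> near q then A p * A q else 0)
        = (\<Sum>p\<in>P. if near p then A p else 0) * (\<Sum>q\<in>P. if near q then A q else 0)"
      by (simp add: sum_product if_distrib cong: if_cong) (intro sum.cong refl, auto)
    also have "\<dots> = (\<Sum>p\<in>P. if near p then A p else 0)^2" by (simp add: power2_eq_square)
    also have "\<dots> \<le> (300 * M * Sig)^2"
      by (intro power_mono nearsum) (simp add: sum_nonneg A0)
    finally show ?thesis .
  qed
  have degb: "real (card {q\<in>P. far2 p q}) \<le> 180000 * M^2" if pP: "p \<in> P" for p
  proof (cases "norm (\<eta> p) > sqrt R")
    case True
    obtain j k where jk: "p = (j, k)" "j \<in> S" "k \<in> S" using pP unfolding P_def by (cases p) auto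
    have "card {q\<in>P. far2 p q} \<le> card {q\<in>S\<times>S. norm ((j + k) - (fst q + snd q)) \<le> 2}"
      by (rule card_mono) (use fin in \<open>auto simp: P_def far2_def \<eta>_def jk\<close>)
    then have "real (card {q\<in>P. far2 p q}) \<le> real (card {q\<in>S\<times>S. norm ((j + k) - (fst q + snd q)) \<le> 2})" by simp
    also have "\<dots> \<le> 180000 * M^2" unfolding M_def
      by (rule deg_bound[OF fin R circ jk(2,3)]) (use True in \<open>simp add: \<eta>_def jk\<close>)
    finally show ?thesis .
  next
    case False
    then have "{q\<in>P. far2 p q} = {}" by (auto simp: far2_def)
    then have "card {q\<in>P. far2 p q} = 0" by (simp only: card.empty)
    then show ?thesis by simp
  qed
  have part2: "(\<Sum>p\<in>P. \<Sum>q\<in>P. if far2 p q then A p * A q else 0) \<le> 180000 * M^2 * Sig^2"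
  proof -
    have "(\<Sum>p\<in>P. \<Sum>q\<in>P. if far2 p q then A p * A q else 0) \<le> (\<Sum>p\<in>P. (A p)^2 * real (card {q\<in>P. far2 p q}))"
      by (rule sym_amgm[OF fP _ A0]) (auto simp: far2_def norm_minus_commute)
    also have "\<dots> \<le> (\<Sum>p\<in>P. (A p)^2 * (180000 * M^2))"
      by (intro sum_mono mult_left_mono degb) auto
    also have "(\<Sum>p\<in>P. (A p)^2) = Sig^2"
      unfolding P_def Sig_def A_def
      by (simp add: power2_eq_square sum_product mult_ac sum.cartesian_product case_prod_beta)
    then have "(\<Sum>p\<in>P. (A p)^2 * (180000 * M^2)) = 180000 * M^2 * Sig^2"
      using sum_distrib_right[of "\<lambda>p. (A p)^2" P "180000 * M^2"] by (simp add: mult_ac)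
    finally show ?thesis .
  qed
  have "(\<Sum>p\<in>P. \<Sum>q\<in>P. if norm (\<eta> p - \<eta> q) \<le> 2 then A p * A q else 0)
      \<le> (\<Sum>p\<in>P. \<Sum>q\<in>P. (if near p \<and> near q then A p * A q else 0) + (if far2 p q then A p * A q else 0))"
    by (intro sum_mono split)
  also have "\<dots> = (\<Sum>p\<in>P. \<Sum>q\<in>P. if near p \<and> near q then A p * A q else 0) + (\<Sum>p\<in>P. \<Sum>q\<in>P. if far2 p q then A p * A q else 0)"
    by (simp add: sum.distrib)
  also have "\<dots> \<le> (300 * M * Sig)^2 + 180000 * M^2 * Sig^2" by (rule add_mono[OF part1 part2])
  also have "\<dots> = 270000 * M^2 * Sig^2" by (simp add: power_mult_distrib)
  finally show ?thesis unfolding P_def A_def \<eta>_def M_def Sig_def al_def .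
qed


lemma nat_sum_bound: "(\<Sum>k\<in>{..N}. 1 / (1 + (real k)^2)) \<le> 3 - 2 / (real N + 1)"
proof (induction N)
  case 0 then show ?case by simp
next
  case (Suc N)
  define m where "m = real N + 1"
  have m1: "m \<ge> 1" by (simp add: m_def)
  have step: "1 / (1 + m^2) \<le> 2 / m - 2 / (m + 1)"
  proof -
    have "2 / m - 2 / (m + 1) = 2 / (m * (m + 1))" using m1 by (simp add: field_simps)
    also have "1 / (1 + m^2) \<le> 2 / (m * (m + 1))"
    proof -
      have "0 \<le> (m - 1)^2" by simp
      then have le: "m * (m + 1) \<le> 2 * (1 + m^2)" using m1 by (simp add: power2_eq_square algebra_simps)
      have p: "0 < 1 + m^2" by (simp add: add_pos_nonneg)
      have "1 / (1 + m^2) = 2 / (2 * (1 + m^2))" using p by (simp add: field_simps)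
      also have "\<dots> \<le> 2 / (m * (m + 1))" using le m1 p by (intro divide_left_mono) (auto intro!: mult_pos_pos)
      finally show ?thesis .
    qed
    finally show ?thesis by simp
  qed
  have "(\<Sum>k\<in>{..Suc N}. 1 / (1 + (real k)^2)) = (\<Sum>k\<in>{..N}. 1 / (1 + (real k)^2)) + 1 / (1 + m^2)"
    by (simp add: m_def)
  also have "\<dots> \<le> 3 - 2 / m + (2 / m - 2 / (m + 1))" using Suc step by (simp add: m_def)
  also have "\<dots> = 3 - 2 / (real (Suc N) + 1)" by (simp add: m_def)
  finally show ?case .
qed

lemma nat_set_sum_bound:
  assumes "finite K"
  shows "(\<Sum>k\<in>K. 1 / (1 + (real k)^2)) \<le> 3"
proof (cases "K = {}")
  case True then show ?thesis by simp
next
  case False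
  have "(\<Sum>k\<in>K. 1 / (1 + (real k)^2)) \<le> (\<Sum>k\<in>{..Max K}. 1 / (1 + (real k)^2))"
    by (rule sum_mono2) (use assms in auto)
  also have "\<dots> \<le> 3 - 2 / (real (Max K) + 1)" by (rule nat_sum_bound)
  also have "\<dots> \<le> 3" by simp
  finally show ?thesis .
qed

lemma int_set_sum_bound:
  assumes "finite X"
  shows "(\<Sum>n\<in>X. 1 / (1 + (real_of_int (m - n))^2)) \<le> 6"
proof -
  define Y where "Y = (\<lambda>n. m - n) ` X"
  have fY: "finite Y" using assms by (simp add: Y_def)
  have "(\<Sum>n\<in>X. 1 / (1 + (real_of_int (m - n))^2)) = (\<Sum>d\<in>Y. 1 / (1 + (real_of_int d)^2))"
    unfolding Y_def by (subst sum.reindex) (auto simp: inj_on_def)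
  also have "\<dots> = (\<Sum>d\<in>{d\<in>Y. d \<ge> 0}. 1 / (1 + (real_of_int d)^2)) + (\<Sum>d\<in>{d\<in>Y. \<not> d \<ge> 0}. 1 / (1 + (real_of_int d)^2))"
  proof -
    have "(\<Sum>d\<in>Y. 1 / (1 + (real_of_int d)^2)) = (\<Sum>d\<in>{d\<in>Y. d \<ge> 0} \<union> {d\<in>Y. \<not> d \<ge> 0}. 1 / (1 + (real_of_int d)^2))"
      by (rule sum.cong) auto
    also have "\<dots> = (\<Sum>d\<in>{d\<in>Y. d \<ge> 0}. 1 / (1 + (real_of_int d)^2)) + (\<Sum>d\<in>{d\<in>Y. \<not> d \<ge> 0}. 1 / (1 + (real_of_int d)^2))"
      by (rule sum.union_disjoint) (use fY in auto)
    finally show ?thesis .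
  qed
  also have "(\<Sum>d\<in>{d\<in>Y. d \<ge> 0}. 1 / (1 + (real_of_int d)^2)) = (\<Sum>k\<in>nat ` {d\<in>Y. d \<ge> 0}. 1 / (1 + (real k)^2))"
    by (subst sum.reindex) (auto simp: inj_on_def intro!: sum.cong)
  also have "\<dots> \<le> 3" by (rule nat_set_sum_bound) (use fY in simp)
  also have "(\<Sum>d\<in>{d\<in>Y. \<not> d \<ge> 0}. 1 / (1 + (real_of_int d)^2)) = (\<Sum>k\<in>(\<lambda>d. nat (- d)) ` {d\<in>Y. \<not> d \<ge> 0}. 1 / (1 + (real k)^2))"
    by (subst sum.reindex) (auto simp: inj_on_def intro!: sum.cong)
  also have "\<dots> \<le> 3" by (rule nat_set_sum_bound) (use fY in simp)
  finally show ?thesis by simp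
qed


lemma Basis_real2: "(Basis :: (real^2) set) = {axis 1 1, axis 2 1}"
  unfolding Basis_vec_def using exhaust_2 by (auto, metis)

lemma Kb_cart: "Kb (\<zeta>::real^2) = 64 / (1 + (\<zeta>$1)^2) * (64 / (1 + (\<zeta>$2)^2))"
proof -
  have "axis (1::2) (1::real) \<noteq> axis 2 1" by (simp add: axis_eq_axis)
  then show ?thesis unfolding Kb_def Basis_real2 by (simp add: inner_axis)
qed

definition kap :: "real \<Rightarrow> real" where "kap d = 192 / (1 + d^2)"

lemma kap_nonneg: "0 \<le> kap d" by (simp add: kap_def add_pos_nonneg less_imp_le)

lemma k_cell:
  fixes y d :: real
  assumes "\<bar>y - d\<bar> < 1"
  shows "64 / (1 + y^2) \<le> kap d"
proof -
  have "\<bar>d\<bar> \<le> \<bar>y\<bar> + 1" using assms by linarith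
  then have "d^2 \<le> (\<bar>y\<bar> + 1)^2" by (metis abs_ge_zero power2_abs power_mono)
  also have "\<dots> \<le> 2 * y^2 + 2"
  proof -
    have "0 \<le> (\<bar>y\<bar> - 1)^2" by simp
    then show ?thesis by (simp add: power2_eq_square algebra_simps)
  qed
  finally have "d^2 \<le> 2 * y^2 + 2" .
  moreover have "0 \<le> y^2" by simp
  ultimately have "1 + d^2 \<le> 3 + 3 * y^2" by linarith
  then have le: "1 + d^2 \<le> 3 * (1 + y^2)" by (simp add: distrib_left)
  have p: "0 < 1 + d^2" "0 < 1 + y^2" by (simp_all add: add_pos_nonneg)
  have "64 / (1 + y^2) = 192 / (3 * (1 + y^2))" using p(2) by (simp add: field_simps)
  also have "\<dots> \<le> 192 / (1 + d^2)" using le p by (intro divide_left_mono) auto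
  finally show ?thesis by (simp add: kap_def)
qed

lemma floor_diff_close: "\<bar>(x - z) - real_of_int (\<lfloor>x\<rfloor> - \<lfloor>z\<rfloor>)\<bar> < 1"
  using of_int_floor_le[of x] real_of_int_floor_add_one_gt[of x]
        of_int_floor_le[of z] real_of_int_floor_add_one_gt[of z]
  by (simp add: abs_less_iff) linarith

lemma wsym:
  fixes G :: "'c \<Rightarrow> real"
  assumes fin: "finite C" and sym: "\<And>c c'. K c c' = K c' c" and K0: "\<And>c c'. K c c' \<ge> 0"
  shows "(\<Sum>c\<in>C. \<Sum>c'\<in>C. K c c' * (G c * G c')) \<le> (\<Sum>c\<in>C. (G c)^2 * (\<Sum>c'\<in>C. K c c'))"
proof -
  have "(\<Sum>c\<in>C. \<Sum>c'\<in>C. K c c' * (G c * G c')) \<le> (\<Sum>c\<in>C. \<Sum>c'\<in>C. K c c' * (((G c)^2 + (G c')^2) / 2))"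
  proof (intro sum_mono mult_left_mono K0)
    fix c c'
    have "0 \<le> (G c - G c')^2" by simp
    then show "G c * G c' \<le> ((G c)^2 + (G c')^2) / 2" by (simp add: power2_eq_square algebra_simps)
  qed
  also have "\<dots> = (\<Sum>c\<in>C. \<Sum>c'\<in>C. (K c c' * (G c)^2 + K c c' * (G c')^2) / 2)"
    by (intro sum.cong refl) (simp add: distrib_left add_divide_distrib)
  also have "\<dots> = ((\<Sum>c\<in>C. \<Sum>c'\<in>C. K c c' * (G c)^2) + (\<Sum>c\<in>C. \<Sum>c'\<in>C. K c c' * (G c')^2)) / 2"
    by (simp add: sum_divide_distrib[symmetric] sum.distrib)
  also have "(\<Sum>c\<in>C. \<Sum>c'\<in>C. K c c' * (G c')^2) = (\<Sum>c\<in>C. \<Sum>c'\<in>C. K c c' * (G c)^2)"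
    by (subst sum.swap) (simp add: sym)
  also have "(\<Sum>c\<in>C. \<Sum>c'\<in>C. K c c' * (G c)^2) = (\<Sum>c\<in>C. (G c)^2 * (\<Sum>c'\<in>C. K c c'))"
    by (simp add: sum_distrib_left sum_distrib_right mult_ac)
  finally show ?thesis by simp
qed

lemma group_sum:
  fixes A :: "'p \<Rightarrow> real"
  assumes "finite P"
  shows "(\<Sum>p\<in>P. h (g p) * A p) = (\<Sum>c\<in>g ` P. h c * (\<Sum>p\<in>{p\<in>P. g p = c}. A p))"
proof -
  have "(\<Sum>p\<in>P. h (g p) * A p) = (\<Sum>c\<in>g ` P. \<Sum>p\<in>{p\<in>P. g p = c}. h (g p) * A p)"
    by (rule sum.group[symmetric]) (use assms in auto)
  also have "\<dots> = (\<Sum>c\<in>g ` P. h c * (\<Sum>p\<in>{p\<in>P. g p = c}. A p))"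
    by (intro sum.cong refl) (simp add: sum_distrib_left)
  finally show ?thesis .
qed


lemma lattice:
  fixes A :: "'p \<Rightarrow> real" and \<eta> :: "'p \<Rightarrow> real^2"
  assumes fin: "finite P" and A0: "\<And>p. A p \<ge> 0"
  shows "(\<Sum>p\<in>P. \<Sum>q\<in>P. A p * A q * Kb (\<eta> p - \<eta> q))
      \<le> (192 * 6)^2 * (\<Sum>p\<in>P. \<Sum>q\<in>P. if norm (\<eta> p - \<eta> q) \<le> 2 then A p * A q else 0)"
proof -
  define cell where "cell = (\<lambda>p. (\<lfloor>\<eta> p $ 1\<rfloor>, \<lfloor>\<eta> p $ 2\<rfloor>))"
  define KK where "KK = (\<lambda>c c' :: int \<times> int. kap (of_int (fst c - fst c')) * kap (of_int (snd c - snd c')))"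
  define C where "C = cell ` P"
  define G where "G = (\<lambda>c. \<Sum>p\<in>{p\<in>P. cell p = c}. A p)"
  have fC: "finite C" using fin by (simp add: C_def)
  have KK0: "KK c c' \<ge> 0" for c c' by (simp add: KK_def kap_nonneg)
  have KKsym: "KK c c' = KK c' c" for c c'
  proof -
    have "kap x = kap (-x)" for x by (simp add: kap_def)
    then show ?thesis unfolding KK_def by (metis minus_diff_eq of_int_minus)
  qed
  have s1: "A p * A q * Kb (\<eta> p - \<eta> q) \<le> A p * A q * KK (cell p) (cell q)" for p q
  proof (intro mult_left_mono)
    show "0 \<le> A p * A q" using A0 by (simp add: mult_nonneg_nonneg)
    have "Kb (\<eta> p - \<eta> q) = 64 / (1 + ((\<eta> p - \<eta> q)$1)^2) * (64 / (1 + ((\<eta> p - \<eta> q)$2)^2))"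
      by (rule Kb_cart)
    also have "\<dots> \<le> KK (cell p) (cell q)"
      unfolding KK_def cell_def
      using floor_diff_close[of "\<eta> p $ 1" "\<eta> q $ 1"] floor_diff_close[of "\<eta> p $ 2" "\<eta> q $ 2"]
      by (intro mult_mono k_cell) (auto simp: add_pos_nonneg less_imp_le kap_nonneg)
    finally show "Kb (\<eta> p - \<eta> q) \<le> KK (cell p) (cell q)" .
  qed
  have s2: "(\<Sum>p\<in>P. \<Sum>q\<in>P. A p * A q * KK (cell p) (cell q)) = (\<Sum>c\<in>C. \<Sum>c'\<in>C. KK c c' * (G c * G c'))"
  proof -
    have "(\<Sum>p\<in>P. \<Sum>q\<in>P. A p * A q * KK (cell p) (cell q))
        = (\<Sum>p\<in>P. (\<Sum>c'\<in>C. KK (cell p) c' * G c') * A p)"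
    proof (intro sum.cong refl)
      fix p
      have "(\<Sum>q\<in>P. A p * A q * KK (cell p) (cell q)) = A p * (\<Sum>q\<in>P. KK (cell p) (cell q) * A q)"
        by (simp add: sum_distrib_left mult_ac)
      also have "(\<Sum>q\<in>P. KK (cell p) (cell q) * A q) = (\<Sum>c'\<in>C. KK (cell p) c' * G c')"
        unfolding C_def G_def by (rule group_sum[OF fin])
      finally show "(\<Sum>q\<in>P. A p * A q * KK (cell p) (cell q)) = (\<Sum>c'\<in>C. KK (cell p) c' * G c') * A p"
        by simp
    qed
    also have "\<dots> = (\<Sum>c\<in>C. (\<Sum>c'\<in>C. KK c c' * G c') * G c)"
      unfolding C_def G_def by (rule group_sum[OF fin])
    also have "\<dots> = (\<Sum>c\<in>C. \<Sum>c'\<in>C. KK c c' * (G c * G c'))"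
      by (intro sum.cong refl) (simp add: sum_distrib_left sum_distrib_right mult_ac)
    finally show ?thesis .
  qed
  have rowsum: "(\<Sum>c'\<in>C. KK c c') \<le> (192 * 6)^2" for c
  proof -
    have "(\<Sum>c'\<in>C. KK c c') \<le> (\<Sum>c'\<in>fst ` C \<times> snd ` C. KK c c')"
      by (rule sum_mono2) (use fC KK0 in \<open>auto simp: image_iff, force+\<close>)
    also have "\<dots> = (\<Sum>n\<in>fst ` C. kap (of_int (fst c - n))) * (\<Sum>n\<in>snd ` C. kap (of_int (snd c - n)))"
      by (simp add: KK_def sum_product sum.cartesian_product case_prod_beta)
    also have "\<dots> \<le> (192 * 6) * (192 * 6)"
    proof (intro mult_mono)
      have b: "(\<Sum>n\<in>X. kap (of_int (m - n))) \<le> 192 * 6" if "finite X" for X m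
      proof -
        have "(\<Sum>n\<in>X. kap (of_int (m - n))) = 192 * (\<Sum>n\<in>X. 1 / (1 + (real_of_int (m - n))^2))"
          by (simp add: kap_def sum_distrib_left)
        also have "\<dots> \<le> 192 * 6" using int_set_sum_bound[OF that, of m] by simp
        finally show ?thesis .
      qed
      show "(\<Sum>n\<in>fst ` C. kap (of_int (fst c - n))) \<le> 192 * 6" using b fC by simp
      show "(\<Sum>n\<in>snd ` C. kap (of_int (snd c - n))) \<le> 192 * 6" using b fC by simp
      show "0 \<le> (\<Sum>n\<in>snd ` C. kap (of_int (snd c - n)))" by (simp add: sum_nonneg kap_nonneg)
    qed simp
    finally show ?thesis by (simp add: power2_eq_square)
  qed
  have s3: "(\<Sum>c\<in>C. \<Sum>c'\<in>C. KK c c' * (G c * G c')) \<le> (192 * 6)^2 * (\<Sum>c\<in>C. (G c)^2)"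
  proof -
    have "(\<Sum>c\<in>C. \<Sum>c'\<in>C. KK c c' * (G c * G c')) \<le> (\<Sum>c\<in>C. (G c)^2 * (\<Sum>c'\<in>C. KK c c'))"
      by (rule wsym[OF fC KKsym KK0])
    also have "\<dots> \<le> (\<Sum>c\<in>C. (G c)^2 * (192 * 6)^2)"
      by (intro sum_mono mult_left_mono rowsum) simp
    finally show ?thesis by (simp add: sum_distrib_left sum_distrib_right mult_ac)
  qed
  have s4: "(\<Sum>c\<in>C. (G c)^2) = (\<Sum>p\<in>P. \<Sum>q\<in>P. if cell p = cell q then A p * A q else 0)"
  proof -
    have "(\<Sum>p\<in>P. \<Sum>q\<in>P. if cell p = cell q then A p * A q else 0) = (\<Sum>p\<in>P. G (cell p) * A p)"
    proof (intro sum.cong refl)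
      fix p
      have "(\<Sum>q\<in>P. if cell p = cell q then A p * A q else 0) = (\<Sum>q\<in>{q\<in>P. cell q = cell p}. A p * A q)"
        using fin by (simp add: sum.inter_filter[symmetric] eq_commute)
      then show "(\<Sum>q\<in>P. if cell p = cell q then A p * A q else 0) = G (cell p) * A p"
        by (simp add: G_def sum_distrib_left mult_ac)
    qed
    also have "\<dots> = (\<Sum>c\<in>C. G c * G c)" unfolding C_def G_def by (rule group_sum[OF fin])
    finally show ?thesis by (simp add: power2_eq_square)
  qed
  have s5: "(\<Sum>p\<in>P. \<Sum>q\<in>P. if cell p = cell q then A p * A q else 0)
      \<le> (\<Sum>p\<in>P. \<Sum>q\<in>P. if norm (\<eta> p - \<eta> q) \<le> 2 then A p * A q else 0)"
  proof (intro sum_mono)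
    fix p q
    show "(if cell p = cell q then A p * A q else 0) \<le> (if norm (\<eta> p - \<eta> q) \<le> 2 then A p * A q else 0)"
    proof (cases "cell p = cell q")
      case True
      have c: "\<bar>(\<eta> p - \<eta> q)$i\<bar> < 1" if "\<lfloor>\<eta> p $ i\<rfloor> = \<lfloor>\<eta> q $ i\<rfloor>" for i
        using floor_diff_close[of "\<eta> p $ i" "\<eta> q $ i"] that by simp
      have "norm (\<eta> p - \<eta> q) \<le> (\<Sum>i\<in>UNIV. \<bar>(\<eta> p - \<eta> q)$i\<bar>)" by (rule norm_le_l1_cart)
      also have "\<dots> = \<bar>(\<eta> p - \<eta> q)$1\<bar> + \<bar>(\<eta> p - \<eta> q)$2\<bar>" by (simp add: sum_2)
      also have "\<dots> \<le> 2" using c[of 1] c[of 2] True by (simp add: cell_def)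
      finally show ?thesis using True by simp
    next
      case False then show ?thesis using A0[of p] A0[of q] by (simp add: mult_nonneg_nonneg)
    qed
  qed
  have "(\<Sum>p\<in>P. \<Sum>q\<in>P. A p * A q * Kb (\<eta> p - \<eta> q)) \<le> (\<Sum>p\<in>P. \<Sum>q\<in>P. A p * A q * KK (cell p) (cell q))"
    by (intro sum_mono s1)
  also have "\<dots> \<le> (192 * 6)^2 * (\<Sum>c\<in>C. (G c)^2)" using s2 s3 by simp
  also have "\<dots> \<le> (192 * 6)^2 * (\<Sum>p\<in>P. \<Sum>q\<in>P. if norm (\<eta> p - \<eta> q) \<le> 2 then A p * A q else 0)"
    using s4 s5 by (intro mult_left_mono) auto
  finally show ?thesis .
qed


lemma pow4_powr: "0 \<le> (Y::real) \<Longrightarrow> (Y^4) powr (1/4) = Y"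
proof (cases "Y = 0")
  case False
  assume "0 \<le> Y"
  then have Y: "0 < Y" using False by simp
  have "Y^4 = Y powr (real 4)" using Y by (simp add: powr_realpow)
  then have "(Y^4) powr (1/4) = Y powr (real 4 * (1/4))" by (simp add: powr_powr)
  also have "\<dots> = Y" using Y by simp
  finally show ?thesis .
qed simp

theorem theorem1:
  shows "\<exists>C>0. \<forall>R>0. \<forall>S :: (real^2) set. \<forall>a :: real^2 \<Rightarrow> complex. \<forall>Q.
    finite S \<longrightarrow> (\<forall>\<xi>\<in>S. norm \<xi> = R) \<longrightarrow> unit_square Q \<longrightarrow>
    (LINT x:Q|lborel. (cmod (exp_sum S a x)) ^ 4) powr (1/4)
      \<le> C * sqrt (real (cap_mult R S)) * sqrt (\<Sum>\<xi>\<in>S. (cmod (a \<xi>))\<^sup>2)"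
proof -
  define C4 :: real where "C4 = (1/4) * (192 * 6)^2 * 270000"
  define C :: real where "C = C4 powr (1/4)"
  have C40: "C4 > 0" by (simp add: C4_def)
  have C0: "C > 0" using C40 by (simp add: C_def)
  have C4eq: "C^4 = C4"
  proof -
    have "C^4 = C powr (real 4)" using C0 by (simp add: powr_realpow)
    also have "\<dots> = C4" unfolding C_def using C40 by (simp add: powr_powr)
    finally show ?thesis .
  qed
  show ?thesis
  proof (intro exI[of _ C] conjI C0 allI impI)
    fix R :: real and S :: "(real^2) set" and a :: "real^2 \<Rightarrow> complex" and Q :: "(real^2) set"
    assume R: "R > 0" and fin: "finite S" and circ: "\<forall>\<xi>\<in>S. norm \<xi> = R" and sq: "unit_square Q"
    define M where "M = real (cap_mult R S)"
    define Sig where "Sig = (\<Sum>\<xi>\<in>S. (cmod (a \<xi>))\<^sup>2)"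
    have M0: "M \<ge> 0" by (simp add: M_def)
    have Sig0: "Sig \<ge> 0" by (simp add: Sig_def sum_nonneg)
    define A where "A = (\<lambda>p::(real^2)\<times>(real^2). cmod (a (fst p)) * cmod (a (snd p)))"
    define \<eta> where "\<eta> = (\<lambda>p::(real^2)\<times>(real^2). fst p + snd p)"
    obtain c where c: "(LINT x:Q|lborel. (cmod (exp_sum S a x))^4) \<le> (1/4) * (\<integral>x. W c x * (cmod (exp_sum S a x))^4 \<partial>lborel)"
      using square_bound[OF sq] by blast
    have wb: "(\<integral>x. W c x * (cmod (exp_sum S a x))^4 \<partial>lborel) \<le> (\<Sum>p\<in>S\<times>S. \<Sum>q\<in>S\<times>S. A p * A q * Kb (\<eta> p - \<eta> q))"
      using weighted_bound[OF fin, of c a] unfolding A_def \<eta>_def by simp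
    have lat: "(\<Sum>p\<in>S\<times>S. \<Sum>q\<in>S\<times>S. A p * A q * Kb (\<eta> p - \<eta> q))
        \<le> (192 * 6)^2 * (\<Sum>p\<in>S\<times>S. \<Sum>q\<in>S\<times>S. if norm (\<eta> p - \<eta> q) \<le> 2 then A p * A q else 0)"
      by (rule lattice) (use fin in \<open>auto simp: A_def\<close>)
    have eb: "(\<Sum>p\<in>S\<times>S. \<Sum>q\<in>S\<times>S. if norm (\<eta> p - \<eta> q) \<le> 2 then A p * A q else 0) \<le> 270000 * M^2 * Sig^2"
      using E_bound[OF fin R circ, of a] unfolding A_def \<eta>_def M_def Sig_def by simp
    have I: "(LINT x:Q|lborel. (cmod (exp_sum S a x))^4) \<le> C4 * M^2 * Sig^2"
    proof -
      have "(LINT x:Q|lborel. (cmod (exp_sum S a x))^4) \<le> (1/4) * (\<integral>x. W c x * (cmod (exp_sum S a x))^4 \<partial>lborel)"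
        by (rule c)
      also have "\<dots> \<le> (1/4) * (\<Sum>p\<in>S\<times>S. \<Sum>q\<in>S\<times>S. A p * A q * Kb (\<eta> p - \<eta> q))"
        using wb by simp
      also have "\<dots> \<le> (1/4) * ((192 * 6)^2 * (\<Sum>p\<in>S\<times>S. \<Sum>q\<in>S\<times>S. if norm (\<eta> p - \<eta> q) \<le> 2 then A p * A q else 0))"
        using lat by simp
      also have "\<dots> \<le> (1/4) * ((192 * 6)^2 * (270000 * M^2 * Sig^2))"
        using eb by (intro mult_left_mono) auto
      finally have "(LINT x:Q|lborel. (cmod (exp_sum S a x))^4) \<le> (1/4) * ((192 * 6)^2 * (270000 * M^2 * Sig^2))" .
      then show ?thesis by (simp add: C4_def mult_ac)
    qed
    have I0: "0 \<le> (LINT x:Q|lborel. (cmod (exp_sum S a x))^4)"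
      unfolding set_lebesgue_integral_def by (rule Bochner_Integration.integral_nonneg) (simp add: indicator_def)
    define Y where "Y = C * sqrt M * sqrt Sig"
    have Y0: "Y \<ge> 0" using C0 M0 Sig0 by (simp add: Y_def)
    have Y4: "Y^4 = C4 * M^2 * Sig^2"
    proof -
      have "Y^4 = C^4 * (sqrt M)^4 * (sqrt Sig)^4" by (simp add: Y_def power_mult_distrib)
      also have "(sqrt M)^4 = M^2"
      proof -
        have "(sqrt M)^4 = ((sqrt M)^2)^2" by (simp add: power_mult[symmetric])
        then show ?thesis using M0 by simp
      qed
      also have "(sqrt Sig)^4 = Sig^2"
      proof -
        have "(sqrt Sig)^4 = ((sqrt Sig)^2)^2" by (simp add: power_mult[symmetric])
        then show ?thesis using Sig0 by simp
      qed
      finally show ?thesis by (simp add: C4eq)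
    qed
    have "(LINT x:Q|lborel. (cmod (exp_sum S a x))^4) powr (1/4) \<le> (Y^4) powr (1/4)"
      using I I0 Y4 by (intro powr_mono2) auto
    also have "\<dots> = Y" by (rule pow4_powr[OF Y0])
    finally show "(LINT x:Q|lborel. (cmod (exp_sum S a x))^4) powr (1/4) \<le> C * sqrt (real (cap_mult R S)) * sqrt (\<Sum>\<xi>\<in>S. (cmod (a \<xi>))\<^sup>2)"
      by (simp add: Y_def M_def Sig_def)
  qed
qed


end
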